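(* Let $m_1,m_2\ge3$ be coprime integers, let $n$ be an even integer divisible by $m_1$, and let $Q\in C(n,m_1,m_2)$ with $Ch_1(Q)\ne0$. Then either $Ch_2(Q)=Ch_3(Q)=0$, or $Ch_2(Q)=Ch_4(Q)=Ch_5(Q)=0$.
   Context: $T_k$ denotes the Chebyshev polynomial of the first kind of degree $k$, $T_k(\cos\phi)=\cos(k\phi)$. Every real polynomial $Q$ of degree $n$ can be uniquely written as $Q=\sum_{k=0}^n d_kT_k$ with $d_k\in\mathbb{R}$; set $Ch_i(Q)=d_{n-i}$ for $0\le i\le n$. $C(n,m_1,m_2)$ denotes the set of real polynomials $Q=\sum_{k=0}^n d_kT_k$ with $d_n\ne0$ and such that $d_k=0$ unless $k$ is divisible by $m_1$ or by $m_2$. *)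

theory Defs
  imports "HOL-Computational_Algebra.Polynomial"
begin

text \<open>Chebyshev polynomials of the first kind, T_0 = 1, T_1 = X, T_(k+2) = 2 X T_(k+1) - T_k;
  these satisfy T_k(cos phi) = cos(k phi).\<close>
fun cheb_T :: "nat \<Rightarrow> real poly" where
  "cheb_T 0 = 1"
| "cheb_T (Suc 0) = [:0, 1:]"
| "cheb_T (Suc (Suc k)) = [:0, 2:] * cheb_T (Suc k) - cheb_T k"

definition cheb_coeffs :: "real poly \<Rightarrow> nat \<Rightarrow> real" where
  "cheb_coeffs Q = (THE d. (\<forall>k > degree Q. d k = 0) \<and>
                        Q = (\<Sum>k\<le>degree Q. smult (d k) (cheb_T k)))"

definition Ch :: "nat \<Rightarrow> real poly \<Rightarrow> real" where
  "Ch i Q = (if i \<le> degree Q then cheb_coeffs Q (degree Q - i) else 0)"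

definition C_set :: "nat \<Rightarrow> nat \<Rightarrow> nat \<Rightarrow> real poly set" where
  "C_set n m1 m2 = {Q. \<exists>d :: nat \<Rightarrow> real. Q = (\<Sum>k\<le>n. smult (d k) (cheb_T k)) \<and> d n \<noteq> 0 \<and>
                      (\<forall>k\<le>n. \<not> (m1 dvd k \<or> m2 dvd k) \<longrightarrow> d k = 0)}"

end

theory Submission
  imports Defs
begin

lemma cheb_T_props: "degree (cheb_T k) \<le> k \<and> coeff (cheb_T k) k = (if k = 0 then 1 else 2^(k-1))"
proof (induction k rule: cheb_T.induct)
  case 1 then show ?case by simp
next
  case 2 then show ?case by simp
next
  case (3 k)
  have d1: "degree ([:0, 2:] * cheb_T (Suc k)) \<le> Suc (Suc k)"
    using 3 degree_mult_le[of "[:0,2::real:]" "cheb_T (Suc k)"] by simp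
  have d2: "degree (cheb_T k) \<le> Suc (Suc k)" using 3 by simp
  have c2: "coeff (cheb_T k) (Suc (Suc k)) = 0" using 3 by (simp add: coeff_eq_0)
  have c1: "coeff ([:0, 2:] * cheb_T (Suc k)) (Suc (Suc k)) = 2 * coeff (cheb_T (Suc k)) (Suc k)"
    by simp
  show ?case using d1 d2 c1 c2 3
    by (auto simp: degree_diff_le intro: degree_diff_le)
qed

lemma deg_T: "degree (cheb_T k) = k"
proof -
  have "coeff (cheb_T k) k \<noteq> 0" using cheb_T_props[of k] by simp
  then have "k \<le> degree (cheb_T k)" by (simp add: le_degree)
  then show ?thesis using cheb_T_props[of k] by simp
qed

lemma lc_T: "coeff (cheb_T k) k \<noteq> 0"
  using cheb_T_props[of k] by simp

lemma sum_deg: "degree (\<Sum>k\<le>N. smult (c k) (cheb_T k)) \<le> N"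
  by (rule degree_sum_le) (auto intro: order.trans[OF degree_smult_le] simp: deg_T)

lemma sum_top: "coeff (\<Sum>k\<le>N. smult (c k) (cheb_T k)) N = c N * coeff (cheb_T N) N"
proof -
  have "coeff (\<Sum>k\<le>N. smult (c k) (cheb_T k)) N = (\<Sum>k\<le>N. c k * coeff (cheb_T k) N)"
    by (simp add: coeff_sum)
  also have "\<dots> = (\<Sum>k\<in>{N}. c k * coeff (cheb_T k) N)"
    by (rule sum.mono_neutral_right) (auto simp: coeff_eq_0 deg_T)
  finally show ?thesis by simp
qed

lemma indep: "(\<Sum>k\<le>N. smult (c k) (cheb_T k)) = 0 \<Longrightarrow> k \<le> N \<Longrightarrow> c k = 0"
proof (induction N arbitrary: k)
  case 0 then show ?case by simp
next
  case (Suc N)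
  have "c (Suc N) * coeff (cheb_T (Suc N)) (Suc N) = 0"
    using sum_top[of c "Suc N"] Suc.prems(1) by (metis coeff_0)
  then have cz: "c (Suc N) = 0" using lc_T by simp
  have "(\<Sum>k\<le>N. smult (c k) (cheb_T k)) = 0" using Suc.prems cz by simp
  then show ?case using Suc cz by (cases "k = Suc N") auto
qed

lemma uniq:
  assumes "(\<Sum>k\<le>N. smult (a k) (cheb_T k)) = (\<Sum>k\<le>N. smult (b k) (cheb_T k))" "k \<le> N"
  shows "a k = b k"
proof -
  have "(\<Sum>k\<le>N. smult (a k - b k) (cheb_T k)) = 0"
    using assms(1) by (simp add: smult_diff_left sum_subtractf)
  from indep[OF this assms(2)] show ?thesis by simp
qed

lemma main:
  assumes Q: "Q = (\<Sum>k\<le>n. smult (d k) (cheb_T k))" and dn: "d n \<noteq> 0"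
  shows "degree Q = n" "cheb_coeffs Q = (\<lambda>k. if k \<le> n then d k else 0)"
proof -
  have "coeff Q n \<noteq> 0" using Q sum_top[where N=n and c=d] dn lc_T by simp
  then have "n \<le> degree Q" by (simp add: le_degree)
  then show dQ: "degree Q = n" using sum_deg[where N=n and c=d] Q by simp
  let ?e = "\<lambda>k. if k \<le> n then d k else 0"
  have eQ: "Q = (\<Sum>k\<le>n. smult (?e k) (cheb_T k))" using Q by simp
  show "cheb_coeffs Q = ?e"
    unfolding cheb_coeffs_def dQ
  proof (rule the_equality)
    show "(\<forall>k>n. ?e k = 0) \<and> Q = (\<Sum>k\<le>n. smult (?e k) (cheb_T k))" using eQ by simp
  next
    fix d' assume h: "(\<forall>k>n. d' k = 0) \<and> Q = (\<Sum>k\<le>n. smult (d' k) (cheb_T k))"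
    show "d' = ?e"
    proof
      fix k show "d' k = ?e k"
        using h uniq[of d' n ?e k] eQ by (cases "k \<le> n") auto
    qed
  qed
qed

theorem corollary3p2:
  fixes m1 m2 n :: nat and Q :: "real poly"
  assumes "m1 \<ge> 3" and "m2 \<ge> 3" and "coprime m1 m2"
    and "even n" and "m1 dvd n"
    and "Q \<in> C_set n m1 m2"
    and "Ch 1 Q \<noteq> 0"
  shows "(Ch 2 Q = 0 \<and> Ch 3 Q = 0) \<or> (Ch 2 Q = 0 \<and> Ch 4 Q = 0 \<and> Ch 5 Q = 0)"
proof -
  obtain d where Q: "Q = (\<Sum>k\<le>n. smult (d k) (cheb_T k))" and dn: "d n \<noteq> 0"
    and dz: "\<And>k. k \<le> n \<Longrightarrow> \<not> (m1 dvd k \<or> m2 dvd k) \<Longrightarrow> d k = 0"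
    using assms(6) unfolding C_set_def by blast
  have Ch: "Ch i Q = (if i \<le> n then d (n - i) else 0)" for i
    unfolding Ch_def main[OF Q dn] by simp
  have n1: "1 \<le> n" and dn1: "d (n-1) \<noteq> 0"
    using assms(7) Ch[of 1] by (auto split: if_splits)
  have "m1 dvd (n-1) \<or> m2 dvd (n-1)" using dz[of "n-1"] dn1 by auto
  moreover have "\<not> m1 dvd (n-1)"
  proof
    assume "m1 dvd (n-1)"
    then have "m1 dvd n - (n-1)" using assms(5) dvd_diff_nat by blast
    then have "m1 dvd 1" using n1 by simp
    then show False using assms(1) by simp
  qed
  ultimately have h2: "m2 dvd (n-1)" by blast
  have odd2: "odd m2"
  proof
    assume "even m2"
    then have "even (n-1)" using h2 by (rule dvd_trans)
    then show False using assms(4) n1 by simp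
  qed
  have nd1: "\<not> m1 dvd (n - j)" if "j \<le> n" "\<not> m1 dvd j" for j
  proof
    assume "m1 dvd (n - j)"
    then have "m1 dvd n - (n - j)" using assms(5) dvd_diff_nat by blast
    then show False using that by simp
  qed
  have nd2: "\<not> m2 dvd (n - j)" if "j \<le> n" "1 < j" "\<not> m2 dvd (j - 1)" for j
  proof
    assume "m2 dvd (n - j)"
    then have "m2 dvd (n - 1) - (n - j)" using h2 dvd_diff_nat by blast
    moreover have "(n - 1) - (n - j) = j - 1" using that by simp
    ultimately show False using that by simp
  qed
  have small: "\<not> m dvd j" if "3 \<le> m" "0 < j" "j < m" for m j :: nat
    using that by (meson dvd_imp_le not_le)
  have z: "Ch j Q = 0" if "1 < j" "\<not> m1 dvd j" "\<not> m2 dvd (j - 1)" for j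
  proof (cases "j \<le> n")
    case True
    have "d (n - j) = 0"
      using dz[of "n-j"] nd1[OF True that(2)] nd2[OF True that(1) that(3)] by simp
    then show ?thesis unfolding Ch using True by simp
  qed (simp add: Ch)
  have C2: "Ch 2 Q = 0"
  proof (rule z)
    show "\<not> m1 dvd 2" using small[of m1 2] assms(1) by simp
    show "\<not> m2 dvd (2 - 1)" using assms(2) by simp
  qed simp
  show ?thesis
  proof (cases "m1 = 3")
    case False
    have "Ch 3 Q = 0"
    proof (rule z)
      show "\<not> m1 dvd 3"
      proof
        assume "m1 dvd 3"
        then have "m1 \<le> 3" by (rule dvd_imp_le) simp
        then show False using False assms(1) by simp
      qed
      show "\<not> m2 dvd (3 - 1)" using small[of m2 2] assms(2) by simp
    qed simp
    then show ?thesis using C2 by simp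
  next
    case True
    have "Ch 4 Q = 0"
    proof (rule z)
      show "\<not> m1 dvd 4" using True by simp
      show "\<not> m2 dvd (4 - 1)"
      proof
        assume "m2 dvd (4-1)"
        then have "m2 \<le> 3" by (intro dvd_imp_le) simp_all
        then have "m2 = 3" using assms(2) by simp
        then show False using assms(3) True by simp
      qed
    qed simp
    moreover have "Ch 5 Q = 0"
    proof (rule z)
      show "\<not> m1 dvd 5" using True by simp
      show "\<not> m2 dvd (5 - 1)"
      proof
        assume a: "m2 dvd (5-1)"
        then have "m2 \<le> 4" by (intro dvd_imp_le) simp_all
        then have "m2 = 3 \<or> m2 = 4" using assms(2) by auto
        then show False using a odd2 by auto
      qed
    qed simp
    ultimately show ?thesis using C2 by simp
  qed
qed

end
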